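(* For each integer $n\ge 0$, let $a_n$ denote the number of non-negative integers $k$ such that the decimal representation of $k$ is a palindrome and the decimal representation of $k^2$ is a palindrome having exactly $n+1$ digits. Then $a_0=4$, $a_{2n+1}=0$ for all $n\ge 0$, and for all $n\ge 1$, $$a_{2n}=\frac{\left((-1)^{n}+3\right)n^{3}-\left(9(-1)^{n}+15\right)n^{2}+\left(65(-1)^{n}+111\right)n+21(-1)^{n}+171}{96}.$$
   Context: This is the sequence A307717 of the On-Line Encyclopedia of Integer Sequences, re-indexed to start at $0$: $a_n$ is its $(n+1)$-st term. Numbers are written in base $10$ without leading zeros; the integer $0$ is written with one digit, so it is a palindrome of length $1$ (and $0,1,2,3$ are the palindromes $k$ with $k^2$ a one-digit palindrome). *)

theory Defs
  imports Main "HOL.Real"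
begin

fun digits10_aux :: "nat \<Rightarrow> nat list" where
  "digits10_aux n = (if n = 0 then [] else n mod 10 # digits10_aux (n div 10))"

definition digits10 :: "nat \<Rightarrow> nat list" where
  "digits10 n = (if n = 0 then [0] else digits10_aux n)"

definition num_digits :: "nat \<Rightarrow> nat" where
  "num_digits n = length (digits10 n)"

definition is_palindrome :: "nat \<Rightarrow> bool" where
  "is_palindrome n \<longleftrightarrow> rev (digits10 n) = digits10 n"

definition a_seq :: "nat \<Rightarrow> nat" where
  "a_seq n = card {k :: nat. is_palindrome k \<and> is_palindrome (k^2) \<and> num_digits (k^2) = n + 1}"

end

theory Submission
  imports Defs "HOL-Computational_Algebra.Polynomial"
begin

declare digits10_aux.simps[simp del]

lemma aux0[simp]: "digits10_aux 0 = []" by (simp add: digits10_aux.simps)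
lemma auxS: "n \<noteq> 0 \<Longrightarrow> digits10_aux n = n mod 10 # digits10_aux (n div 10)"
  by (subst digits10_aux.simps) simp

definition dg :: "nat \<Rightarrow> nat \<Rightarrow> nat" where
  "dg n j = n div 10^j mod 10"

lemma aux_lt: "n < 10 ^ length (digits10_aux n)"
proof (induction n rule: digits10_aux.induct)
  case (1 n)
  show ?case
  proof (cases "n = 0")
    case True then show ?thesis by simp
  next
    case False
    then have "n div 10 < 10 ^ length (digits10_aux (n div 10))" using 1 by simp
    then show ?thesis using False by (simp add: auxS)
  qed
qed

lemma aux_ge: "n > 0 \<Longrightarrow> 10 ^ (length (digits10_aux n) - 1) \<le> n"
proof (induction n rule: digits10_aux.induct)
  case (1 n)
  have eq: "digits10_aux n = n mod 10 # digits10_aux (n div 10)" using 1(2) by (simp add: auxS)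
  show ?case
  proof (cases "n div 10 = 0")
    case True
    then show ?thesis using 1(2) eq by simp
  next
    case False
    define l where "l = length (digits10_aux (n div 10))"
    have h: "10 ^ (l - 1) \<le> n div 10" using 1 False unfolding l_def by simp
    have l1: "l \<ge> 1" using False unfolding l_def by (simp add: auxS)
    have "(10::nat) ^ l = 10 * 10 ^ (l - 1)" using l1
      by (metis Suc_diff_1 less_le_trans power_Suc zero_less_one)
    also have "\<dots> \<le> 10 * (n div 10)" using h by simp
    also have "\<dots> \<le> n" by simp
    finally have "10 ^ l \<le> n" .
    then show ?thesis using eq unfolding l_def by simp
  qed
qed

lemma aux_nth: "j < length (digits10_aux n) \<Longrightarrow> digits10_aux n ! j = dg n j"
proof (induction n arbitrary: j rule: digits10_aux.induct)
  case (1 n)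
  have n0: "n \<noteq> 0" using 1(2) by (cases "n = 0") auto
  show ?case
  proof (cases j)
    case 0 then show ?thesis using n0 by (simp add: auxS dg_def)
  next
    case (Suc i)
    have "i < length (digits10_aux (n div 10))" using 1(2) n0 Suc
      by (simp add: auxS)
    then have "digits10_aux (n div 10) ! i = dg (n div 10) i" using 1 n0 by simp
    then show ?thesis using n0 Suc
      by (simp add: auxS dg_def div_mult2_eq)
  qed
qed

lemma nd_pos: "num_digits n \<ge> 1"
proof (cases "n = 0")
  case False then show ?thesis unfolding num_digits_def digits10_def using auxS[of n] by simp
qed (simp add: num_digits_def digits10_def)

lemma nd_lt: "n < 10 ^ num_digits n"
  unfolding num_digits_def digits10_def using aux_lt[of n] by auto

lemma nd_ge: "n > 0 \<Longrightarrow> 10 ^ (num_digits n - 1) \<le> n"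
  unfolding num_digits_def digits10_def using aux_ge[of n] by auto

lemma nd_eq: assumes "10^(L-1) \<le> n" "n < 10^L" "L \<ge> 1" shows "num_digits n = L"
proof -
  have "(1::nat) \<le> 10^(L-1)" by simp
  then have n0: "n > 0" using assms(1) by linarith
  have a: "10 ^ (num_digits n - 1) < (10::nat) ^ L" using nd_ge[OF n0] assms(2) by linarith
  have b: "10 ^ (L - 1) < (10::nat) ^ num_digits n" using nd_lt[of n] assms(1) by linarith
  from a have "num_digits n - 1 < L" by (simp add: power_strict_increasing_iff)
  moreover from b have "L - 1 < num_digits n" by (simp add: power_strict_increasing_iff)
  ultimately show ?thesis using nd_pos[of n] assms(3) by linarith
qed

lemma digits10_map: "digits10 n = map (dg n) [0..<num_digits n]"
proof (cases "n = 0")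
  case True
  then show ?thesis by (simp add: digits10_def num_digits_def dg_def)
next
  case False
  then have d: "digits10 n = digits10_aux n" by (simp add: digits10_def)
  show ?thesis unfolding num_digits_def d
    by (rule nth_equalityI) (simp_all add: aux_nth)
qed

lemma pal_iff: "is_palindrome n \<longleftrightarrow> (\<forall>j<num_digits n. dg n j = dg n (num_digits n - 1 - j))"
proof -
  define xs where "xs = map (dg n) [0..<num_digits n]"
  have e: "rev xs ! j = xs ! j \<longleftrightarrow> dg n j = dg n (num_digits n - 1 - j)"
    if "j < num_digits n" for j using that unfolding xs_def by (auto simp: rev_nth)
  have l: "length xs = num_digits n" by (simp add: xs_def)
  have "is_palindrome n \<longleftrightarrow> rev xs = xs"
    unfolding is_palindrome_def digits10_map xs_def ..
  also have "\<dots> \<longleftrightarrow> (\<forall>j<length xs. rev xs ! j = xs ! j)"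
    by (simp add: list_eq_iff_nth_eq)
  also have "\<dots> \<longleftrightarrow> (\<forall>j<num_digits n. dg n j = dg n (num_digits n - 1 - j))"
    using e l by auto
  finally show ?thesis .
qed


lemma dg_lt: "dg n j < 10" by (simp add: dg_def)

lemma dg_mod: "dg x j = x mod 10^(Suc j) div 10^j"
proof -
  have e: "x mod 10^(Suc j) = x mod 10^j + 10^j * (x div 10^j mod 10)"
    using mod_mult2_eq[of x "10^j" 10] by (simp add: power_Suc2 mult.commute)
  have "(x mod 10^j + 10^j * (x div 10^j mod 10)) div 10^j = x div 10^j mod 10"
    by simp
  then show ?thesis using e by (simp add: dg_def)
qed

lemma expand: "n mod 10^L = (\<Sum>j<L. dg n j * 10^j)"
proof (induction L)
  case 0 then show ?case by simp
next
  case (Suc L)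
  have e: "n mod 10^(Suc L) = n mod 10^L + dg n L * 10^L"
    using mod_mult2_eq[of n "10^L" 10] by (simp add: dg_def power_Suc2 mult.commute)
  show ?case using e Suc.IH by simp
qed

lemma expand': "n < 10^L \<Longrightarrow> n = (\<Sum>j<L. dg n j * 10^j)"
  using expand[of n L] by simp

lemma dg_big: "n < 10^L \<Longrightarrow> L \<le> j \<Longrightarrow> dg n j = 0"
proof -
  assume a: "n < 10^L" "L \<le> j"
  have "(10::nat)^L \<le> 10^j" using a(2) by simp
  then have "n div 10^j = 0" using a(1) by (intro div_less) linarith
  then show ?thesis by (simp add: dg_def)
qed

definition PS :: "(nat \<Rightarrow> nat) \<Rightarrow> nat \<Rightarrow> nat" where
  "PS c n = (\<Sum>i<n. c i * 10^i)"

definition tc :: "(nat \<Rightarrow> nat) \<Rightarrow> nat \<Rightarrow> nat" where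
  "tc c j = PS c j div 10^j"

lemma modP: "j \<le> n \<Longrightarrow> PS c n mod 10^j = PS c j mod 10^j"
proof (induction n rule: dec_induct)
  case base then show ?case by simp
next
  case (step k)
  have "(10::nat)^k = 10^j * 10^(k-j)" using step(1) by (simp add: power_add[symmetric])
  then have "PS c (Suc k) = PS c k + (c k * 10^(k-j)) * 10^j" by (simp add: PS_def)
  then have "PS c (Suc k) mod 10^j = PS c k mod 10^j" by simp
  then show ?case using step by simp
qed

lemma key1:
  assumes "j < n"
  shows "dg (PS c n) j = (c j + tc c j) mod 10" and "tc c (Suc j) = (c j + tc c j) div 10"
proof -
  have "dg (PS c n) j = PS c n mod 10^(Suc j) div 10^j" by (rule dg_mod)
  also have "\<dots> = PS c (Suc j) mod 10^(Suc j) div 10^j" using modP[of "Suc j" n c] assms by simp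
  also have "\<dots> = dg (PS c (Suc j)) j" by (rule dg_mod[symmetric])
  finally have a: "dg (PS c n) j = dg (PS c (Suc j)) j" .
  have b: "PS c (Suc j) div 10^j = c j + tc c j"
    by (simp add: PS_def tc_def)
  show "dg (PS c n) j = (c j + tc c j) mod 10" using a b by (simp add: dg_def)
  have "tc c (Suc j) = PS c (Suc j) div (10^j * 10)" by (simp only: tc_def power_Suc2)
  also have "\<dots> = PS c (Suc j) div 10^j div 10" by (rule div_mult2_eq)
  finally show "tc c (Suc j) = (c j + tc c j) div 10" using b by simp
qed

lemma key_eq: "j < n \<Longrightarrow> c j + tc c j = dg (PS c n) j + 10 * tc c (Suc j)"
  using key1[of j n c] by simp

lemma tc0: "tc c 0 = 0" by (simp add: tc_def PS_def)

lemma no_carry: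
  assumes "\<forall>j<L. c j < 10"
  shows "j \<le> L \<Longrightarrow> tc c j = 0"
proof (induction j)
  case 0 show ?case by (rule tc0)
next
  case (Suc j)
  then show ?case using key1(2)[of j "Suc j" c] assms by simp
qed

lemma no_carry_digits:
  assumes "\<forall>j<L. c j < 10"
  shows "PS c L < 10^L" and "j < L \<Longrightarrow> dg (PS c L) j = c j"
proof -
  have "tc c L = 0" using no_carry[OF assms] by simp
  then show "PS c L < 10^L" unfolding tc_def by (simp add: div_eq_0_iff)
  assume "j < L"
  then show "dg (PS c L) j = c j" using key1(1)[of j L c] no_carry[OF assms, of j] assms by simp
qed

lemma carry_sym:
  assumes N: "N = PS c (Suc M)" and Nlt: "N < 10^(Suc M)"
    and cs: "\<forall>j\<le>M. c j = c (M - j)"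
    and es: "\<forall>j\<le>M. dg N j = dg N (M - j)"
  shows "\<forall>j\<le>M. c j = dg N j"
proof -
  have top: "tc c (Suc M) = 0" using N Nlt by (simp add: tc_def)
  have rel: "tc c j + 10 * tc c (Suc M - j) = tc c (M - j) + 10 * tc c (Suc j)" if "j \<le> M" for j
  proof -
    have e1: "c j + tc c j = dg N j + 10 * tc c (Suc j)" using key_eq[of j "Suc M" c] that N by simp
    have e2: "c (M - j) + tc c (M - j) = dg N (M - j) + 10 * tc c (Suc (M - j))"
      using key_eq[of "M - j" "Suc M" c] that N by simp
    have "Suc (M - j) = Suc M - j" using that by simp
    then have e3: "tc c (Suc (M - j)) = tc c (Suc M - j)" by simp
    show ?thesis using e1 e2 e3 cs[rule_format, OF that] es[rule_format, OF that] by linarith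
  qed
  have z: "j \<le> Suc M \<Longrightarrow> tc c j = 0 \<and> tc c (Suc M - j) = 0" for j
  proof (induction j)
    case 0 then show ?case using tc0 top by simp
  next
    case (Suc j)
    then have "tc c j = 0" "tc c (Suc M - j) = 0" "j \<le> M" by auto
    then have "tc c (M - j) + 10 * tc c (Suc j) = 0" using rel[of j] by simp
    moreover have "Suc M - Suc j = M - j" by simp
    ultimately show ?case by simp
  qed
  show ?thesis
  proof (intro allI impI)
    fix j assume "j \<le> M"
    then show "c j = dg N j" using key_eq[of j "Suc M" c] z[of j] z[of "Suc j"] N by simp
  qed
qed


definition pk :: "nat \<Rightarrow> nat poly" where
  "pk k = Poly (map (dg k) [0..<num_digits k])"

definition sq :: "nat \<Rightarrow> nat" where
  "sq k = (\<Sum>i<num_digits k. dg k i ^ 2)"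

lemma dg_zero_beyond: "num_digits k \<le> j \<Longrightarrow> dg k j = 0"
  using dg_big[OF nd_lt] by blast

lemma coeff_pk: "coeff (pk k) j = dg k j"
  by (cases "j < num_digits k") (auto simp: pk_def nth_default_def dg_zero_beyond)

lemma dg_top: assumes "k > 0" shows "dg k (num_digits k - 1) = k div 10^(num_digits k - 1)"
  and "dg k (num_digits k - 1) \<ge> 1"
proof -
  define m where "m = num_digits k"
  have m1: "m \<ge> 1" using nd_pos m_def by simp
  have a: "10^(m-1) \<le> k" using nd_ge[OF assms] m_def by simp
  have b: "k < 10^(m-1) * 10" using nd_lt[of k] m1 m_def
    by (metis Suc_diff_1 less_le_trans power_Suc2 zero_less_one)
  have "k div 10^(m-1) < 10" using b by (simp add: div_less_iff_less_mult)
  then show "dg k (num_digits k - 1) = k div 10^(num_digits k - 1)" by (simp add: dg_def m_def[symmetric])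
  have "\<not> k div 10^(m-1) < 1" using a div_less_iff_less_mult[of "10^(m-1)" k 1] by simp
  then have "1 \<le> k div 10^(m-1)" by simp
  then show "dg k (num_digits k - 1) \<ge> 1" using \<open>k div 10^(m-1) < 10\<close> by (simp add: dg_def m_def[symmetric])
qed

lemma degree_pk: assumes "k > 0" shows "degree (pk k) = num_digits k - 1"
proof (rule antisym)
  show "degree (pk k) \<le> num_digits k - 1"
    by (rule degree_le) (auto simp: coeff_pk dg_zero_beyond)
  show "num_digits k - 1 \<le> degree (pk k)"
    by (rule le_degree) (use dg_top(2)[OF assms] in \<open>simp add: coeff_pk\<close>)
qed

lemma pk_nz: "k > 0 \<Longrightarrow> pk k \<noteq> 0"
  using dg_top(2)[of k] coeff_pk[of k] by (metis coeff_0 not_one_le_zero)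

lemma poly_pk: assumes "k > 0" shows "poly (pk k) 10 = k"
proof -
  have m1: "num_digits k \<ge> 1" by (rule nd_pos)
  have "poly (pk k) 10 = (\<Sum>i\<le>num_digits k - 1. dg k i * 10^i)"
    by (simp add: poly_altdef degree_pk[OF assms] coeff_pk)
  also have "\<dots> = (\<Sum>i<num_digits k. dg k i * 10^i)"
    using m1 by (simp add: lessThan_Suc_atMost[symmetric])
  also have "\<dots> = k" using expand'[OF nd_lt[of k]] by simp
  finally show ?thesis .
qed

lemma two_xy: "2 * x * y \<le> x^2 + (y::nat)^2"
proof -
  have "0 \<le> (int x - int y)^2" by simp
  then have "2 * int x * int y \<le> int x ^ 2 + int y ^ 2" by (simp add: power2_diff)
  then have "int (2 * x * y) \<le> int (x^2 + y^2)" by simp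
  then show ?thesis by linarith
qed

lemma sum_zero_beyond: fixes f :: "nat \<Rightarrow> nat" assumes "\<forall>i\<ge>m. f i = 0" shows "(\<Sum>i<n. f i) \<le> (\<Sum>i<m. (f i::nat))"
proof (cases "n \<le> m")
  case True show ?thesis by (rule sum_mono2) (use True in auto)
next
  case False
  have "(\<Sum>i<n. f i) = (\<Sum>i<m. f i)"
    by (rule sum.mono_neutral_right) (use False assms in auto)
  then show ?thesis by simp
qed

lemma conv_bound: "coeff (pk k * pk k) j \<le> sq k"
proof -
  define d where "d = dg k"
  have z: "\<forall>i\<ge>num_digits k. d i ^ 2 = 0" using dg_zero_beyond d_def by simp
  have "2 * coeff (pk k * pk k) j = (\<Sum>i<Suc j. 2 * (d i * d (j - i)))"
    by (simp add: coeff_mult coeff_pk d_def lessThan_Suc_atMost sum_distrib_left)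
  also have "\<dots> \<le> (\<Sum>i<Suc j. d i ^ 2 + d (j - i) ^ 2)"
    by (intro sum_mono) (metis two_xy mult.assoc)
  also have "\<dots> = (\<Sum>i<Suc j. d i ^ 2) + (\<Sum>i<Suc j. d (j - i) ^ 2)"
    by (simp add: sum.distrib)
  also have "(\<Sum>i<Suc j. d (j - i) ^ 2) = (\<Sum>i<Suc j. d i ^ 2)"
    using sum.nat_diff_reindex[of "\<lambda>i. d i ^ 2" "Suc j"] by simp
  also have "(\<Sum>i<Suc j. d i ^ 2) \<le> sq k"
    unfolding sq_def d_def[symmetric] by (rule sum_zero_beyond[OF z])
  finally show ?thesis by simp
qed

lemma square_PS:
  assumes "k > 0"
  shows "k^2 = PS (coeff (pk k * pk k)) (Suc (2 * (num_digits k - 1)))"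
    and "degree (pk k * pk k) = 2 * (num_digits k - 1)"
proof -
  show dg2: "degree (pk k * pk k) = 2 * (num_digits k - 1)"
    using degree_mult_eq[OF pk_nz[OF assms] pk_nz[OF assms]] degree_pk[OF assms] by simp
  have "k^2 = poly (pk k * pk k) 10" using poly_pk[OF assms] by (simp add: power2_eq_square)
  also have "\<dots> = (\<Sum>i\<le>2 * (num_digits k - 1). coeff (pk k * pk k) i * 10^i)"
    by (simp add: poly_altdef dg2)
  finally show "k^2 = PS (coeff (pk k * pk k)) (Suc (2 * (num_digits k - 1)))"
    by (simp add: PS_def lessThan_Suc_atMost)
qed

lemma pal_reflect:
  assumes "k > 0" "is_palindrome k"
  shows "reflect_poly (pk k) = pk k"
proof (rule poly_eqI)
  fix n
  have P: "\<forall>j<num_digits k. dg k j = dg k (num_digits k - 1 - j)" using assms(2) pal_iff by blast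
  show "coeff (reflect_poly (pk k)) n = coeff (pk k) n"
  proof (cases "n \<le> num_digits k - 1")
    case True
    then have "n < num_digits k" using nd_pos[of k] by linarith
    then have "dg k n = dg k (num_digits k - 1 - n)" using P by blast
    then show ?thesis using True by (simp add: coeff_reflect_poly degree_pk[OF assms(1)] coeff_pk)
  next
    case False
    then show ?thesis by (auto simp: coeff_reflect_poly degree_pk[OF assms(1)] coeff_pk dg_zero_beyond)
  qed
qed

lemma conv_sym:
  assumes "k > 0" "is_palindrome k" "j \<le> 2 * (num_digits k - 1)"
  shows "coeff (pk k * pk k) j = coeff (pk k * pk k) (2 * (num_digits k - 1) - j)"
proof -
  have "reflect_poly (pk k * pk k) = pk k * pk k"
    using pal_reflect[OF assms(1,2)] by (simp add: reflect_poly_mult)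
  then have "coeff (pk k * pk k) j = coeff (reflect_poly (pk k * pk k)) j" by simp
  also have "\<dots> = coeff (pk k * pk k) (2 * (num_digits k - 1) - j)"
    using assms(3) square_PS(2)[OF assms(1)] by (simp add: coeff_reflect_poly)
  finally show ?thesis .
qed

lemma conv_mid:
  assumes "k > 0" "is_palindrome k"
  shows "coeff (pk k * pk k) (num_digits k - 1) = sq k"
proof -
  have P: "\<forall>j<num_digits k. dg k j = dg k (num_digits k - 1 - j)" using assms(2) pal_iff by blast
  have m1: "num_digits k \<ge> 1" by (rule nd_pos)
  have "coeff (pk k * pk k) (num_digits k - 1) = (\<Sum>i<num_digits k. dg k i * dg k (num_digits k - 1 - i))"
    using m1 by (simp add: coeff_mult coeff_pk lessThan_Suc_atMost[symmetric])
  also have "\<dots> = (\<Sum>i<num_digits k. dg k i ^ 2)"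
  proof (rule sum.cong)
    fix i assume "i \<in> {..<num_digits k}"
    then have "dg k i = dg k (num_digits k - 1 - i)" using P by blast
    then show "dg k i * dg k (num_digits k - 1 - i) = dg k i ^ 2" by (simp add: power2_eq_square)
  qed simp
  finally show ?thesis by (simp add: sq_def)
qed


lemma finite_check:
  fixes a q :: nat
  assumes "1 \<le> a" "a \<le> 9" "a^2 \<le> q" "q < (a+1)^2" "10 \<le> q"
  shows "q div 10 \<noteq> (a * a) mod 10"
proof -
  have "a = 1 \<or> a = 2 \<or> a = 3 \<or> a = 4 \<or> a = 5 \<or> a = 6 \<or> a = 7 \<or> a = 8 \<or> a = 9"
    using assms(1,2) by linarith
  then show ?thesis using assms(3-5)
    apply (elim disjE)
    by (simp_all add: power2_eq_square)
qed

lemma charA: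
  assumes k0: "k > 0" and pk: "is_palindrome k" and pN: "is_palindrome (k^2)"
  shows "sq k \<le> 9 \<and> num_digits (k^2) = 2 * num_digits k - 1"
proof -
  define m where "m = num_digits k"
  define M where "M = 2 * (m - 1)"
  define c where "c = coeff (pk k * pk k)"
  define N where "N = k^2"
  have m1: "m \<ge> 1" using nd_pos m_def by simp
  have NP: "N = PS c (Suc M)" using square_PS(1)[OF k0] unfolding N_def c_def M_def m_def .
  have kge: "10^(m-1) \<le> k" using nd_ge[OF k0] m_def by simp
  have klt: "k < 10^m" using nd_lt[of k] m_def by simp
  have pow: "(10::nat)^M = (10^(m-1))^2" unfolding M_def by (simp add: power_mult[symmetric] mult.commute)
  have Nge: "10^M \<le> N" unfolding N_def pow using kge by (simp add: power_mono)
  have Nlt0: "N < (10^m)^2" unfolding N_def using klt by (simp add: power_strict_mono)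
  have "Suc (Suc M) = m + m" using m1 unfolding M_def by simp
  then have "(10::nat)^(Suc (Suc M)) = (10^m)^2" by (simp only: power_add power2_eq_square)
  then have Nlt: "N < 10^(Suc (Suc M))" using Nlt0 by simp
  show ?thesis
  proof (cases "N < 10^(Suc M)")
    case True
    have ndN: "num_digits N = Suc M" using nd_eq[of "Suc M" N] Nge True by simp
    have es: "\<forall>j\<le>M. dg N j = dg N (M - j)"
    proof (intro allI impI)
      fix j assume "j \<le> M"
      have h: "\<forall>j<num_digits N. dg N j = dg N (num_digits N - 1 - j)" using pN pal_iff N_def by blast
      show "dg N j = dg N (M - j)" using h[rule_format, of j] \<open>j \<le> M\<close> ndN by simp
    qed
    have cs: "\<forall>j\<le>M. c j = c (M - j)"
      using conv_sym[OF k0 pk] unfolding c_def M_def m_def by blast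
    have "\<forall>j\<le>M. c j = dg N j" by (rule carry_sym[OF NP True cs es])
    then have "c (m - 1) = dg N (m - 1)" unfolding M_def by simp
    then have "sq k < 10" using conv_mid[OF k0 pk] dg_lt unfolding c_def m_def by metis
    moreover have "num_digits (k^2) = 2 * num_digits k - 1" using ndN m1 unfolding N_def M_def m_def by simp
    ultimately show ?thesis by simp
  next
    case False
    have ndN: "num_digits N = Suc (Suc M)" using nd_eq[of "Suc (Suc M)" N] False Nlt by simp
    have h: "\<forall>j<num_digits N. dg N j = dg N (num_digits N - 1 - j)" using pN pal_iff N_def by blast
    have e0: "dg N 0 = dg N (Suc M)" using h[rule_format, of 0] ndN by simp
    define a where "a = dg k 0"
    have P: "\<forall>j<m. dg k j = dg k (m - 1 - j)" using pk pal_iff m_def by blast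
    have "a = dg k (m - 1)" using P[rule_format, of 0] m1 unfolding a_def by simp
    then have a_eq: "a = k div 10^(m-1)" and a1: "a \<ge> 1" using dg_top[OF k0] m_def by simp_all
    have a9: "a \<le> 9" using dg_lt[of k 0] a_def by simp
    have ka: "a * 10^(m-1) \<le> k" using a_eq by simp
    have kb: "k < (a+1) * 10^(m-1)" using a_eq div_less_iff_less_mult[of "10^(m-1)" k "a+1"] by simp
    define q where "q = N div 10^M"
    have "(a * 10^(m-1))^2 \<le> k^2" using ka by (rule power_mono) simp
    then have "a^2 * 10^M \<le> N" unfolding N_def pow by (simp add: power_mult_distrib)
    then have q1: "a^2 \<le> q" unfolding q_def
      using div_less_iff_less_mult[of "10^M" N "a^2"] by simp
    have "k^2 < ((a+1) * 10^(m-1))^2" using kb by (rule power_strict_mono) simp_all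
    then have "N < (a+1)^2 * 10^M" unfolding N_def pow by (simp only: power_mult_distrib)
    then have q2: "q < (a+1)^2" unfolding q_def by (simp add: div_less_iff_less_mult)
    have "10 * 10^M \<le> N" using False by simp
    then have q3: "10 \<le> q" unfolding q_def using div_less_iff_less_mult[of "10^M" N 10] by simp
    have "dg N 0 = (a * a) mod 10" unfolding N_def a_def dg_def
      by (simp add: power2_eq_square mod_mult_eq)
    moreover have "dg N (Suc M) = q div 10"
    proof -
      have "N div 10^(Suc M) = N div (10^M * 10)" by (simp only: power_Suc2)
      also have "\<dots> = q div 10" unfolding q_def by (rule div_mult2_eq)
      finally have "N div 10^(Suc M) = q div 10" .
      moreover have "q div 10 < 10"
      proof -
        have "(a+1)^2 \<le> (10::nat)^2" using a9 by (intro power_mono) simp_all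
        then have "q < 10 * 10" using q2 by simp
        then show ?thesis by (rule less_mult_imp_div_less)
      qed
      ultimately show ?thesis by (simp add: dg_def)
    qed
    ultimately have False using e0 finite_check[OF a1 a9 q1 q2 q3] by simp
    then show ?thesis ..
  qed
qed


lemma charB:
  assumes k0: "k > 0" and pk: "is_palindrome k" and s9: "sq k \<le> 9"
  shows "is_palindrome (k^2) \<and> num_digits (k^2) = 2 * num_digits k - 1"
proof -
  define m where "m = num_digits k"
  define M where "M = 2 * (m - 1)"
  define c where "c = coeff (pk k * pk k)"
  define N where "N = k^2"
  have m1: "m \<ge> 1" using nd_pos m_def by simp
  have NP: "N = PS c (Suc M)" using square_PS(1)[OF k0] unfolding N_def c_def M_def m_def .
  have kge: "10^(m-1) \<le> k" using nd_ge[OF k0] m_def by simp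
  have pow: "(10::nat)^M = (10^(m-1))^2" unfolding M_def by (simp add: power_mult[symmetric] mult.commute)
  have Nge: "10^M \<le> N" unfolding N_def pow using kge by (simp add: power_mono)
  have c10: "\<forall>j<Suc M. c j < 10"
  proof (intro allI impI)
    fix j have "c j \<le> sq k" using conv_bound[of k j] unfolding c_def .
    then show "c j < 10" using s9 by linarith
  qed
  have Nlt: "N < 10^(Suc M)" using no_carry_digits(1)[OF c10] NP by simp
  have dN: "j < Suc M \<Longrightarrow> dg N j = c j" for j using no_carry_digits(2)[OF c10] NP by simp
  have ndN: "num_digits N = Suc M" using nd_eq[of "Suc M" N] Nge Nlt by simp
  have cs: "\<forall>j\<le>M. c j = c (M - j)"
    using conv_sym[OF k0 pk] unfolding c_def M_def m_def by blast
  have "is_palindrome N"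
    unfolding pal_iff
  proof (intro allI impI)
    fix j assume j: "j < num_digits N"
    then have "j \<le> M" using ndN by simp
    then have "dg N j = c j" "dg N (num_digits N - 1 - j) = c (M - j)" "c j = c (M - j)"
      using dN[of j] dN[of "M - j"] cs[rule_format, of j] ndN by auto
    then show "dg N j = dg N (num_digits N - 1 - j)" by simp
  qed
  then show ?thesis using ndN m1 unfolding N_def M_def m_def by simp
qed


fun ssq :: "nat list \<Rightarrow> nat" where
  "ssq [] = 0"
| "ssq (x # xs) = x^2 + ssq xs"

lemma ssq_append[simp]: "ssq (xs @ ys) = ssq xs + ssq ys"
  by (induction xs) auto

lemma ssq_rev[simp]: "ssq (rev xs) = ssq xs"
  by (induction xs) auto

lemma ssq_map: "ssq (map g [0..<m]) = (\<Sum>j<m. g j ^ 2)"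
  by (induction m) auto

definition G :: "nat \<Rightarrow> nat \<Rightarrow> nat list set" where
  "G j s = {zs. length zs = j \<and> (\<forall>x\<in>set zs. x < 10) \<and> ssq zs \<le> s}"

lemma G_finite: "finite (G j s)"
proof -
  have "G j s \<subseteq> {xs. set xs \<subseteq> {..<10} \<and> length xs = j}" unfolding G_def by auto
  moreover have "finite {xs. set xs \<subseteq> {..<(10::nat)} \<and> length xs = j}"
    by (rule finite_lists_length_eq) simp
  ultimately show ?thesis by (rule finite_subset)
qed

lemma card_Cons_img: "card (Cons v ` A) = card A"
  by (rule card_image) (simp add: inj_on_def)

lemma arithG:
  assumes "s \<le> 3"
  shows "(v::nat)^2 + r \<le> s \<longleftrightarrow> (v = 0 \<and> r \<le> s) \<or> (v = 1 \<and> 1 \<le> s \<and> r \<le> s - 1)"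
proof -
  consider "v = 0" | "v = 1" | "v \<ge> 2" by linarith
  then show ?thesis
  proof cases
    case 3
    have "2^2 \<le> v^2" using 3 by (rule power_mono) simp
    then show ?thesis using 3 assms by simp
  qed auto
qed

lemma G0: "G 0 s = {[]}" by (auto simp: G_def)

lemma G_Suc0: "G (Suc j) 0 = Cons 0 ` G j 0"
proof (intro equalityI subsetI)
  fix x assume x: "x \<in> G (Suc j) 0"
  then obtain v zs where xe: "x = v # zs" unfolding G_def by (cases x) auto
  then have "v^2 + ssq zs \<le> 0" "zs \<in> G j 0" using x unfolding G_def by auto
  then show "x \<in> Cons 0 ` G j 0" using xe by simp
next
  fix x assume "x \<in> Cons 0 ` G j 0"
  then show "x \<in> G (Suc j) 0" unfolding G_def by auto
qed

lemma G_Suc: assumes "1 \<le> s" "s \<le> 3"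
  shows "G (Suc j) s = Cons 0 ` G j s \<union> Cons 1 ` G j (s - 1)"
proof (intro equalityI subsetI)
  fix x assume x: "x \<in> G (Suc j) s"
  then obtain v zs where xe: "x = v # zs" unfolding G_def by (cases x) auto
  then have a: "v^2 + ssq zs \<le> s" "length zs = j" "\<forall>y\<in>set zs. y < 10" using x unfolding G_def by auto
  from a(1) arithG[OF assms(2)] have "(v = 0 \<and> ssq zs \<le> s) \<or> (v = 1 \<and> ssq zs \<le> s - 1)" by blast
  then show "x \<in> Cons 0 ` G j s \<union> Cons 1 ` G j (s - 1)" using xe a(2,3) unfolding G_def by auto
next
  fix x assume "x \<in> Cons 0 ` G j s \<union> Cons 1 ` G j (s - 1)"
  then show "x \<in> G (Suc j) s" using assms unfolding G_def by auto
qed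

lemma card_G_Suc: assumes "1 \<le> s" "s \<le> 3"
  shows "card (G (Suc j) s) = card (G j s) + card (G j (s - 1))"
proof -
  have "card (Cons 0 ` G j s \<union> Cons 1 ` G j (s - 1)) = card (Cons 0 ` G j s) + card (Cons 1 ` G j (s - 1))"
    by (rule card_Un_disjoint) (auto simp: G_finite)
  then show ?thesis using G_Suc[OF assms] by (simp add: card_Cons_img)
qed

lemma cardG0: "card (G j 0) = 1"
  by (induction j) (simp_all add: G0 G_Suc0 card_Cons_img)

lemma cardG1: "card (G j 1) = j + 1"
  by (induction j) (simp_all add: G0 card_G_Suc cardG0)

lemma cardG2: "2 * card (G j 2) = j^2 + j + 2"
proof (induction j)
  case 0 then show ?case by (simp add: G0)
next
  case (Suc j)
  have "card (G (Suc j) 2) = card (G j 2) + card (G j 1)" using card_G_Suc[of 2 j] by simp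
  then show ?case using Suc cardG1[of j] by (simp add: power2_eq_square algebra_simps)
qed

lemma cardG3: "6 * card (G j 3) = j^3 + 5 * j + 6"
proof (induction j)
  case 0 then show ?case by (simp add: G0)
next
  case (Suc j)
  have "card (G (Suc j) 3) = card (G j 3) + card (G j 2)" using card_G_Suc[of 3 j] by simp
  then show ?case using Suc cardG2[of j] by (simp add: power2_eq_square power3_eq_cube algebra_simps)
qed


definition V :: "nat \<Rightarrow> nat list set" where
  "V m = {xs. length xs = m \<and> (\<forall>x\<in>set xs. x < 10) \<and> xs ! (m - 1) \<noteq> 0 \<and> rev xs = xs \<and> ssq xs \<le> 9}"

definition T :: "nat \<Rightarrow> nat set" where
  "T m = {k. k > 0 \<and> num_digits k = m \<and> is_palindrome k \<and> sq k \<le> 9}"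

definition E :: "nat \<Rightarrow> nat list set" where
  "E h = {ys. length ys = h \<and> (\<forall>x\<in>set ys. x < 10) \<and> hd ys \<noteq> 0 \<and> 2 * ssq ys \<le> 9}"

definition Od :: "nat \<Rightarrow> (nat \<times> nat list) set" where
  "Od h = {(c, ys). c < 10 \<and> length ys = h \<and> (\<forall>x\<in>set ys. x < 10) \<and> hd ys \<noteq> 0 \<and> 2 * ssq ys + c^2 \<le> 9}"

lemma sq_ssq: "sq k = ssq (digits10 k)"
  by (simp add: sq_def digits10_map ssq_map)

lemma rep: "k = (\<Sum>j<length (digits10 k). digits10 k ! j * 10^j)"
proof -
  have "k = (\<Sum>j<num_digits k. dg k j * 10^j)" by (rule expand'[OF nd_lt])
  also have "\<dots> = (\<Sum>j<length (digits10 k). digits10 k ! j * 10^j)"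
    by (rule sum.cong) (simp_all add: num_digits_def[symmetric] digits10_map)
  finally show ?thesis .
qed

lemma inj_digits10: "inj_on digits10 A"
proof (rule inj_onI)
  fix x y assume "digits10 x = digits10 y"
  then show "x = y" using rep[of x] rep[of y] by simp
qed

lemma T_V: assumes "m \<ge> 1" shows "digits10 ` T m = V m"
proof (intro equalityI subsetI)
  fix xs assume "xs \<in> digits10 ` T m"
  then obtain k where k: "k \<in> T m" "xs = digits10 k" by blast
  then have k0: "k > 0" and nd: "num_digits k = m" and pk: "is_palindrome k" and s9: "sq k \<le> 9"
    unfolding T_def by auto
  have xs: "xs = map (dg k) [0..<m]" using k(2) nd digits10_map by simp
  have "xs ! (m - 1) = dg k (m - 1)" using xs assms by simp
  then have "xs ! (m - 1) \<noteq> 0" using dg_top(2)[OF k0] nd by simp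
  moreover have "rev xs = xs" using pk k(2) unfolding is_palindrome_def by simp
  moreover have "ssq xs \<le> 9" using s9 sq_ssq k(2) by simp
  moreover have "\<forall>x\<in>set xs. x < 10" using xs dg_lt by auto
  ultimately show "xs \<in> V m" using xs unfolding V_def by simp
next
  fix xs assume xs: "xs \<in> V m"
  then have l: "length xs = m" and d: "\<forall>x\<in>set xs. x < 10" and t: "xs ! (m - 1) \<noteq> 0"
    and r: "rev xs = xs" and s: "ssq xs \<le> 9" unfolding V_def by auto
  define c where "c = (\<lambda>j. xs ! j)"
  define k where "k = PS c m"
  have c10: "\<forall>j<m. c j < 10" using d l unfolding c_def by auto
  have klt: "k < 10^m" using no_carry_digits(1)[OF c10] k_def by simp
  have dk: "j < m \<Longrightarrow> dg k j = xs ! j" for j using no_carry_digits(2)[OF c10] k_def c_def by simp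
  have "c (m - 1) * 10^(m-1) \<le> k" unfolding k_def PS_def
    by (rule member_le_sum[of "m - 1" "{..<m}" "\<lambda>i. c i * 10^i"]) (use assms in auto)
  moreover have "c (m - 1) \<ge> 1" using t c_def by simp
  ultimately have kge: "10^(m-1) \<le> k"
    using mult_le_mono1[of 1 "c (m - 1)" "10^(m-1)"] by linarith
  have nd: "num_digits k = m" using nd_eq[OF kge klt assms] .
  have "(1::nat) \<le> 10^(m-1)" by simp
  then have k0: "k > 0" using kge by linarith
  have dig: "digits10 k = xs"
    by (rule nth_equalityI) (simp_all add: digits10_map nd l dk)
  have "is_palindrome k" using r dig unfolding is_palindrome_def by simp
  moreover have "sq k \<le> 9" using s dig sq_ssq by simp
  ultimately have "k \<in> T m" using k0 nd unfolding T_def by simp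
  then show "xs \<in> digits10 ` T m" using dig by blast
qed

lemma card_T: "m \<ge> 1 \<Longrightarrow> card (T m) = card (V m)"
  using card_image[OF inj_digits10[of "T m"]] T_V by simp

lemma nth_even: assumes "length ys = h" "h \<ge> 1" shows "(ys @ rev ys) ! (2 * h - 1) = hd ys"
proof -
  have a: "\<not> 2 * h - 1 < h" "2 * h - 1 - h = h - 1" using assms by auto
  have "(ys @ rev ys) ! (2 * h - 1) = rev ys ! (h - 1)" using assms a by (simp add: nth_append)
  also have "\<dots> = ys ! 0" using assms by (simp add: rev_nth)
  also have "\<dots> = hd ys" using assms by (cases ys) auto
  finally show ?thesis .
qed

lemma nth_odd: assumes "length ys = h" "h \<ge> 1" shows "(ys @ c # rev ys) ! (2 * h + 1 - 1) = hd ys"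
proof -
  have "(ys @ c # rev ys) ! (2 * h + 1 - 1) = (c # rev ys) ! h" using assms
    by (simp add: nth_append mult_2)
  also have "\<dots> = rev ys ! (h - 1)" using assms by (cases h) auto
  also have "\<dots> = ys ! 0" using assms by (simp add: rev_nth)
  also have "\<dots> = hd ys" using assms by (cases ys) auto
  finally show ?thesis .
qed

lemma E_V: assumes "h \<ge> 1" shows "(\<lambda>ys. ys @ rev ys) ` E h = V (2 * h)"
proof (intro equalityI subsetI)
  fix xs assume "xs \<in> (\<lambda>ys. ys @ rev ys) ` E h"
  then obtain ys where ys: "ys \<in> E h" "xs = ys @ rev ys" by blast
  then show "xs \<in> V (2 * h)" using nth_even[of ys h] assms unfolding E_def V_def by auto
next
  fix xs assume xs: "xs \<in> V (2 * h)"
  define ys where "ys = take h xs"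
  define zs where "zs = drop h xs"
  have l: "length xs = 2 * h" using xs unfolding V_def by simp
  have x: "xs = ys @ zs" unfolding ys_def zs_def by simp
  have "rev xs = xs" using xs unfolding V_def by simp
  then have "rev zs @ rev ys = ys @ zs" using x by simp
  moreover have "length (rev zs) = length ys" using l unfolding ys_def zs_def by simp
  ultimately have "rev zs = ys" by (simp add: append_eq_append_conv)
  then have "zs = rev ys" by auto
  then have x2: "xs = ys @ rev ys" using x by simp
  have ly: "length ys = h" using l unfolding ys_def by simp
  have "ys \<in> E h" using xs x2 nth_even[OF ly assms] ly unfolding V_def E_def by auto
  then show "xs \<in> (\<lambda>ys. ys @ rev ys) ` E h" using x2 by blast
qed

lemma card_E: assumes "h \<ge> 1" shows "card (V (2 * h)) = card (E h)"
proof -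
  have "inj_on (\<lambda>ys. ys @ rev ys) (E h)"
  proof (rule inj_onI)
    fix x y assume "x \<in> E h" "y \<in> E h" "x @ rev x = y @ rev y"
    then show "x = y" unfolding E_def by (simp add: append_eq_append_conv)
  qed
  then have "card ((\<lambda>ys. ys @ rev ys) ` E h) = card (E h)" by (rule card_image)
  then show ?thesis using E_V[OF assms] by simp
qed

lemma O_V: assumes "h \<ge> 1" shows "(\<lambda>(c, ys). ys @ c # rev ys) ` Od h = V (2 * h + 1)"
proof (intro equalityI subsetI)
  fix xs assume "xs \<in> (\<lambda>(c, ys). ys @ c # rev ys) ` Od h"
  then obtain c ys where ys: "(c, ys) \<in> Od h" "xs = ys @ c # rev ys" by auto
  then show "xs \<in> V (2 * h + 1)" using nth_odd[of ys h c] assms unfolding Od_def V_def by auto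
next
  fix xs assume xs: "xs \<in> V (2 * h + 1)"
  define ys where "ys = take h xs"
  define zs where "zs = drop (Suc h) xs"
  define c where "c = xs ! h"
  have l: "length xs = 2 * h + 1" using xs unfolding V_def by simp
  have x: "xs = ys @ c # zs" unfolding ys_def zs_def c_def using l
    by (simp add: id_take_nth_drop)
  have "rev xs = xs" using xs unfolding V_def by simp
  then have "rev zs @ c # rev ys = ys @ c # zs" using x by simp
  moreover have "length (rev zs) = length ys" using l unfolding ys_def zs_def by simp
  ultimately have "rev zs = ys" by (simp add: append_eq_append_conv)
  then have "zs = rev ys" by auto
  then have x2: "xs = ys @ c # rev ys" using x by simp
  have ly: "length ys = h" using l unfolding ys_def by simp
  have "c < 10" using xs x2 unfolding V_def by simp
  then have "(c, ys) \<in> Od h" using xs x2 nth_odd[OF ly assms, of c] ly unfolding V_def Od_def by auto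
  then show "xs \<in> (\<lambda>(c, ys). ys @ c # rev ys) ` Od h" using x2 by force
qed

lemma card_O: assumes "h \<ge> 1" shows "card (V (2 * h + 1)) = card (Od h)"
proof -
  have "inj_on (\<lambda>(c, ys). ys @ c # rev ys) (Od h)"
  proof (rule inj_onI)
    fix x y assume a: "x \<in> Od h" "y \<in> Od h" "(\<lambda>(c, ys). ys @ c # rev ys) x = (\<lambda>(c, ys). ys @ c # rev ys) y"
    obtain c1 y1 where x: "x = (c1, y1)" by (cases x)
    obtain c2 y2 where y: "y = (c2, y2)" by (cases y)
    have l: "length y1 = length y2" using a(1,2) x y unfolding Od_def by simp
    have "y1 @ c1 # rev y1 = y2 @ c2 # rev y2" using a(3) x y by simp
    then have "y1 = y2 \<and> c1 # rev y1 = c2 # rev y2" using l by (simp add: append_eq_append_conv)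
    then show "x = y" using x y by simp
  qed
  then have "card ((\<lambda>(c, ys). ys @ c # rev ys) ` Od h) = card (Od h)" by (rule card_image)
  then show ?thesis using O_V[OF assms] by simp
qed


lemma sq_ge3: "(3::nat) \<le> v \<Longrightarrow> 9 \<le> v^2"
  using power_mono[of 3 v 2] by simp

lemma arithE:
  "(v::nat) \<noteq> 0 \<and> 2 * (v^2 + r) \<le> 9 \<longleftrightarrow> (v = 2 \<and> r = 0) \<or> (v = 1 \<and> r \<le> 3)"
proof -
  consider "v = 0" | "v = 1" | "v = 2" | "v \<ge> 3" by linarith
  then show ?thesis
  proof cases
    case 4 then show ?thesis using sq_ge3[of v] by auto
  qed auto
qed

lemma arithO:
  "(v::nat) \<noteq> 0 \<and> 2 * (v^2 + r) + c^2 \<le> 9 \<longleftrightarrow>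
    (v = 2 \<and> r = 0 \<and> c \<le> 1) \<or> (v = 1 \<and> r \<le> 3 \<and> c \<le> 1) \<or> (v = 1 \<and> r \<le> 1 \<and> c = 2)"
proof -
  consider "v = 0" | "v = 1" | "v = 2" | "v \<ge> 3" by linarith
  then show ?thesis
  proof cases
    case 4 then show ?thesis using sq_ge3[of v] by auto
  next
    case 2
    consider "c = 0" | "c = 1" | "c = 2" | "c \<ge> 3" by linarith
    then show ?thesis
    proof cases
      case 4 then show ?thesis using sq_ge3[of c] \<open>v = 1\<close> by auto
    qed (use 2 in auto)
  next
    case 3
    consider "c = 0" | "c = 1" | "c \<ge> 2" by linarith
    then show ?thesis
    proof cases
      case 3
      have "2^2 \<le> c^2" using 3 by (rule power_mono) simp
      then show ?thesis using \<open>v = 2\<close> \<open>c \<ge> 2\<close> by auto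
    qed (use 3 in auto)
  qed auto
qed

lemma E_Suc: "E (Suc j) = Cons 2 ` G j 0 \<union> Cons 1 ` G j 3"
proof (intro equalityI subsetI)
  fix x assume x: "x \<in> E (Suc j)"
  then obtain v zs where xe: "x = v # zs" unfolding E_def by (cases x) auto
  then have a: "v \<noteq> 0" "2 * (v^2 + ssq zs) \<le> 9" "length zs = j" "\<forall>y\<in>set zs. y < 10"
    using x unfolding E_def by auto
  from a(1,2) arithE have "(v = 2 \<and> ssq zs = 0) \<or> (v = 1 \<and> ssq zs \<le> 3)" by blast
  then show "x \<in> Cons 2 ` G j 0 \<union> Cons 1 ` G j 3" using xe a(3,4) unfolding G_def by auto
next
  fix x assume "x \<in> Cons 2 ` G j 0 \<union> Cons 1 ` G j 3"
  then show "x \<in> E (Suc j)" unfolding G_def E_def by auto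
qed

lemma card_E_Suc: "card (E (Suc j)) = 1 + card (G j 3)"
proof -
  have "card (Cons 2 ` G j 0 \<union> Cons 1 ` G j 3) = card (Cons 2 ` G j 0) + card (Cons 1 ` G j 3)"
    by (rule card_Un_disjoint) (auto simp: G_finite)
  then show ?thesis using E_Suc by (simp add: card_Cons_img cardG0)
qed

lemma O_Suc: "Od (Suc j) = ({0,1} \<times> Cons 2 ` G j 0) \<union> ({0,1} \<times> Cons 1 ` G j 3) \<union> ({2} \<times> Cons 1 ` G j 1)"
proof (intro equalityI subsetI)
  fix p assume p: "p \<in> Od (Suc j)"
  obtain c x where pe: "p = (c, x)" by (cases p)
  then obtain v zs where xe: "x = v # zs" using p unfolding Od_def by (cases x) auto
  then have a: "v \<noteq> 0" "2 * (v^2 + ssq zs) + c^2 \<le> 9" "length zs = j" "\<forall>y\<in>set zs. y < 10"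
    using p pe unfolding Od_def by auto
  from a(1,2) arithO have "(v = 2 \<and> ssq zs = 0 \<and> c \<le> 1) \<or> (v = 1 \<and> ssq zs \<le> 3 \<and> c \<le> 1) \<or> (v = 1 \<and> ssq zs \<le> 1 \<and> c = 2)" by blast
  then show "p \<in> ({0,1} \<times> Cons 2 ` G j 0) \<union> ({0,1} \<times> Cons 1 ` G j 3) \<union> ({2} \<times> Cons 1 ` G j 1)"
    using pe xe a(3,4) unfolding G_def by auto
next
  fix p :: "nat \<times> nat list" assume "p \<in> ({0,1} \<times> Cons 2 ` G j 0) \<union> ({0,1} \<times> Cons 1 ` G j 3) \<union> ({2} \<times> Cons 1 ` G j 1)"
  then show "p \<in> Od (Suc j)" unfolding G_def Od_def by auto
qed

lemma card_O_Suc: "card (Od (Suc j)) = 2 + 2 * card (G j 3) + card (G j 1)"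
proof -
  have AB: "({0::nat,1} \<times> Cons 2 ` G j 0) \<union> ({0,1} \<times> Cons 1 ` G j 3) = {0,1} \<times> E (Suc j)"
    unfolding E_Suc by (rule Sigma_Un_distrib2[symmetric])
  have fE: "finite (E (Suc j))" unfolding E_Suc by (simp add: G_finite)
  have d: "({0::nat,1} \<times> E (Suc j)) \<inter> ({2} \<times> Cons 1 ` G j 1) = {}"
    by (simp add: Times_Int_Times)
  have "card (({0::nat,1} \<times> E (Suc j)) \<union> ({2} \<times> Cons 1 ` G j 1))
      = card ({0::nat,1} \<times> E (Suc j)) + card ({2::nat} \<times> Cons 1 ` G j 1)"
    by (rule card_Un_disjoint) (use fE d in \<open>simp_all add: G_finite\<close>)
  also have "card ({0::nat,1} \<times> E (Suc j)) = 2 * (1 + card (G j 3))"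
    by (simp add: card_cartesian_product card_E_Suc)
  also have "card ({2::nat} \<times> Cons 1 ` G j 1) = card (G j 1)"
    by (simp add: card_cartesian_product card_Cons_img)
  finally show ?thesis using O_Suc AB by simp
qed


lemma pal0: "is_palindrome 0" by (simp add: is_palindrome_def digits10_def)
lemma nd0: "num_digits 0 = 1" by (simp add: num_digits_def digits10_def)

lemma S_mem:
  "(is_palindrome k \<and> is_palindrome (k^2) \<and> num_digits (k^2) = n + 1) \<longleftrightarrow>
   (k = 0 \<and> n = 0) \<or> (k \<in> T (num_digits k) \<and> 2 * num_digits k - 1 = n + 1)"
proof (cases "k = 0")
  case True then show ?thesis using pal0 nd0 by (auto simp: T_def)
next
  case False
  then have k0: "k > 0" by simp
  show ?thesis
  proof
    assume a: "is_palindrome k \<and> is_palindrome (k^2) \<and> num_digits (k^2) = n + 1"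
    then have "sq k \<le> 9 \<and> num_digits (k^2) = 2 * num_digits k - 1" using charA[OF k0] by blast
    then show "(k = 0 \<and> n = 0) \<or> (k \<in> T (num_digits k) \<and> 2 * num_digits k - 1 = n + 1)"
      using a k0 unfolding T_def by auto
  next
    assume "(k = 0 \<and> n = 0) \<or> (k \<in> T (num_digits k) \<and> 2 * num_digits k - 1 = n + 1)"
    then have b: "k \<in> T (num_digits k)" "2 * num_digits k - 1 = n + 1" using False by auto
    then have "is_palindrome k" "sq k \<le> 9" unfolding T_def by auto
    then show "is_palindrome k \<and> is_palindrome (k^2) \<and> num_digits (k^2) = n + 1"
      using charB[OF k0] b(2) by auto
  qed
qed

lemma S_set: "{k. is_palindrome k \<and> is_palindrome (k^2) \<and> num_digits (k^2) = n + 1}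
   = {k. (k = 0 \<and> n = 0) \<or> (k \<in> T (num_digits k) \<and> 2 * num_digits k - 1 = n + 1)}"
  using S_mem by blast

lemma T1: "T 1 = {1, 2, 3}"
proof (intro equalityI subsetI)
  fix k assume "k \<in> T 1"
  then have k: "k > 0" "num_digits k = 1" "sq k \<le> 9" unfolding T_def by auto
  have "k < 10" using nd_lt[of k] k(2) by simp
  then have "sq k = k^2" using k(2) by (simp add: sq_def dg_def)
  then have "k^2 \<le> 9" using k(3) by simp
  then have "k \<le> 3" using sq_ge3[of "k"] power_mono[of 4 k 2] by (cases "k \<ge> 4") auto
  then show "k \<in> {1, 2, 3}" using k(1) by auto
next
  fix k :: nat assume "k \<in> {1, 2, 3}"
  then have k: "k > 0" "k < 10" "k^2 \<le> 9" by auto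
  have nd: "num_digits k = 1" using nd_eq[of 1 k] k by simp
  have "is_palindrome k" unfolding pal_iff nd by simp
  moreover have "sq k = k^2" using nd k(2) by (simp add: sq_def dg_def)
  ultimately show "k \<in> T 1" using k nd unfolding T_def by simp
qed

lemma a_odd: "a_seq (2 * n + 1) = 0"
proof -
  have e: "\<not> (2 * num_digits k - 1 = 2 * n + 1 + 1)" for k using nd_pos[of k] by presburger
  have "{k. is_palindrome k \<and> is_palindrome (k^2) \<and> num_digits (k^2) = 2 * n + 1 + 1} = {}"
  proof (rule equals0I)
    fix k assume "k \<in> {k. is_palindrome k \<and> is_palindrome (k^2) \<and> num_digits (k^2) = 2 * n + 1 + 1}"
    then have "(k = 0 \<and> 2 * n + 1 = 0) \<or> (k \<in> T (num_digits k) \<and> 2 * num_digits k - 1 = 2 * n + 1 + 1)"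
      using S_mem[of k "2 * n + 1"] by simp
    then show False using e[of k] by simp
  qed
  then show ?thesis unfolding a_seq_def by (metis card.empty)
qed

lemma a_zero: "a_seq 0 = 4"
proof -
  have "{k. (k = 0 \<and> (0::nat) = 0) \<or> (k \<in> T (num_digits k) \<and> 2 * num_digits k - 1 = 0 + 1)} = {0} \<union> T 1"
  proof (intro equalityI subsetI)
    fix k assume "k \<in> {k. (k = 0 \<and> (0::nat) = 0) \<or> (k \<in> T (num_digits k) \<and> 2 * num_digits k - 1 = 0 + 1)}"
    then have "k = 0 \<or> (k \<in> T (num_digits k) \<and> num_digits k = 1)" using nd_pos[of k] by auto
    then show "k \<in> {0} \<union> T 1" by auto
  next
    fix k assume "k \<in> {0} \<union> T 1"
    then have "k = 0 \<or> (k \<in> T 1 \<and> num_digits k = 1)" unfolding T_def by auto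
    then show "k \<in> {k. (k = 0 \<and> (0::nat) = 0) \<or> (k \<in> T (num_digits k) \<and> 2 * num_digits k - 1 = 0 + 1)}"
      by auto
  qed
  then show ?thesis unfolding a_seq_def S_set T1 by simp
qed

lemma a_even: assumes "n \<ge> 1" shows "a_seq (2 * n) = card (T (n + 1))"
proof -
  have "{k. (k = 0 \<and> 2 * n = 0) \<or> (k \<in> T (num_digits k) \<and> 2 * num_digits k - 1 = 2 * n + 1)} = T (n + 1)"
  proof (intro equalityI subsetI)
    fix k assume "k \<in> {k. (k = 0 \<and> 2 * n = 0) \<or> (k \<in> T (num_digits k) \<and> 2 * num_digits k - 1 = 2 * n + 1)}"
    then have "k \<in> T (num_digits k)" "2 * num_digits k - 1 = 2 * n + 1" using assms by auto
    moreover then have "num_digits k = n + 1" by simp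
    ultimately show "k \<in> T (n + 1)" by simp
  next
    fix k assume "k \<in> T (n + 1)"
    then have "k \<in> T (num_digits k)" "num_digits k = n + 1" unfolding T_def by auto
    then show "k \<in> {k. (k = 0 \<and> 2 * n = 0) \<or> (k \<in> T (num_digits k) \<and> 2 * num_digits k - 1 = 2 * n + 1)}"
      by simp
  qed
  then show ?thesis unfolding a_seq_def S_set by simp
qed

lemma real_G3: "real (card (G j 3)) = (real j ^ 3 + 5 * real j + 6) / 6"
proof -
  have "real (6 * card (G j 3)) = real (j^3 + 5 * j + 6)" using cardG3[of j] by simp
  then show ?thesis by simp
qed

lemma formula:
  assumes "n \<ge> 1"
  shows "real (a_seq (2*n)) =
         (((-1)^n + 3) * real n ^ 3 - (9 * (-1)^n + 15) * real n ^ 2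
          + (65 * (-1)^n + 111) * real n + 21 * (-1)^n + 171) / 96"
proof (cases "even n")
  case False
  then obtain j where n: "n = 2 * j + 1" using oddE by blast
  have "a_seq (2*n) = card (T (2 * (j + 1)))" using a_even[OF assms] n by simp
  also have "\<dots> = card (E (Suc j))" using card_T[of "2 * (j+1)"] card_E[of "j+1"] by simp
  also have "\<dots> = 1 + card (G j 3)" by (rule card_E_Suc)
  finally have a: "real (a_seq (2*n)) = 1 + (real j ^ 3 + 5 * real j + 6) / 6" using real_G3 by simp
  have m: "(-1::real)^n = -1" using False by simp
  show ?thesis unfolding a m unfolding n
    by (simp add: field_simps power2_eq_square power3_eq_cube; simp add: algebra_simps)
next
  case True
  then obtain j0 where "n = 2 * j0" by blast
  then have "n = 2 * (j0 - 1) + 2" using assms by (cases j0) auto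
  then obtain j where n: "n = 2 * j + 2" by blast
  have "a_seq (2*n) = card (T (2 * (j + 1) + 1))" using a_even[OF assms] n by simp
  also have "\<dots> = card (Od (Suc j))" using card_T[of "2 * (j+1) + 1"] card_O[of "j+1"] by simp
  also have "\<dots> = 2 + 2 * card (G j 3) + card (G j 1)" by (rule card_O_Suc)
  finally have "real (a_seq (2*n)) = 2 + 2 * real (card (G j 3)) + (real j + 1)"
    using cardG1[of j] by simp
  then have a: "real (a_seq (2*n)) = 2 + 2 * ((real j ^ 3 + 5 * real j + 6) / 6) + (real j + 1)"
    unfolding real_G3 .
  have m: "(-1::real)^n = 1" using True by simp
  show ?thesis unfolding a m unfolding n
    by (simp add: field_simps power2_eq_square power3_eq_cube; simp add: algebra_simps)
qed

theorem mainTheorem1: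
  shows "a_seq 0 = 4
    \<and> (\<forall>n. a_seq (2*n+1) = 0)
    \<and> (\<forall>n\<ge>1. real (a_seq (2*n)) =
         (((-1)^n + 3) * real n ^ 3 - (9 * (-1)^n + 15) * real n ^ 2
          + (65 * (-1)^n + 111) * real n + 21 * (-1)^n + 171) / 96)"
  using a_zero a_odd formula by blast

end
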